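(* Let $A$ be a stationary, co-stationary subset of $\omega_1$, let $T$ be the tree of all countable closed (compact in the order topology of $\omega_1$) subsets of $A$ ordered by $s\le t$ iff $s$ is an initial part of $t$, and let $P(T)$ be the set of all paths of $T$ (downward closed linearly ordered subsets of $T$), viewed as a subspace of $2^T$ via characteristic functions. Then $P(T)$ is a Corson compactum, and the square $P(T)\times P(T)$ is not $nwd$-separable (hence not $d$-separable).
   Context: A Corson compactum is a compact space embeddable in $\Sigma(\mathbb{R}^\kappa)=\{x\in\mathbb{R}^\kappa:|\{\alpha:x(\alpha)\neq0\}|\le\omega\}$ for some cardinal $\kappa$. A space is $d$-separable if it has a dense subset which is a countable union of discrete subspaces; it is $nwd$-separable if it has a dense subset which is a countable union of nowhere dense subsets. *)

theory Defs
  imports "HOL-Analysis.Analysis"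
begin

text \<open>The ordinal omega_1 is modelled by a type 'a of class wellorder carrying the
order topology (class linorder_topology), which is uncountable while every proper
initial segment is countable.\<close>

definition omega1_like :: "'a::{wellorder,linorder_topology} itself \<Rightarrow> bool" where
  "omega1_like _ \<longleftrightarrow> uncountable (UNIV :: 'a set) \<and> (\<forall>x::'a. countable {..<x})"

definition club :: "('a::{wellorder,linorder_topology}) set \<Rightarrow> bool" where
  "club C \<longleftrightarrow> closed C \<and> (\<forall>x. \<exists>y\<in>C. x < y)"

definition stationary :: "('a::{wellorder,linorder_topology}) set \<Rightarrow> bool" where
  "stationary A \<longleftrightarrow> (\<forall>C. club C \<longrightarrow> A \<inter> C \<noteq> {})"

definition ccs_tree :: "('a::{wellorder,linorder_topology}) set \<Rightarrow> 'a set set" where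
  "ccs_tree A = {s. s \<subseteq> A \<and> countable s \<and> compact s}"

definition initial_part :: "('a::linorder) set \<Rightarrow> 'a set \<Rightarrow> bool" where
  "initial_part s t \<longleftrightarrow> s \<subseteq> t \<and> (\<forall>x\<in>s. \<forall>y\<in>t. y \<le> x \<longrightarrow> y \<in> s)"

definition tree_paths :: "('a::linorder) set set \<Rightarrow> 'a set set set" where
  "tree_paths T = {p. p \<subseteq> T
      \<and> (\<forall>t\<in>p. \<forall>s\<in>T. initial_part s t \<longrightarrow> s \<in> p)
      \<and> (\<forall>s\<in>p. \<forall>t\<in>p. initial_part s t \<or> initial_part t s)}"

definition path_space :: "('a::linorder) set set \<Rightarrow> ('a set \<Rightarrow> bool) topology" where
  "path_space T = subtopology (product_topology (\<lambda>_. discrete_topology (UNIV::bool set)) T)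
                     ((\<lambda>p. restrict (\<lambda>t. t \<in> p) T) ` tree_paths T)"

definition sigma_product :: "'i set \<Rightarrow> ('i \<Rightarrow> real) set" where
  "sigma_product I = {x \<in> PiE I (\<lambda>_. UNIV). countable {i\<in>I. x i \<noteq> 0}}"

text \<open>Corson compactum. Index sets are drawn from the type 'x * nat, whose
cardinality is at least |X| + aleph_0, which suffices for every kappa.\<close>
definition corson_compactum :: "'x topology \<Rightarrow> bool" where
  "corson_compactum X \<longleftrightarrow> compact_space X \<and>
     (\<exists>(I::('x \<times> nat) set) f. embedding_map X
        (subtopology (product_topology (\<lambda>_. euclideanreal) I) (sigma_product I)) f)"

definition nowhere_dense_in :: "'x topology \<Rightarrow> 'x set \<Rightarrow> bool" where
  "nowhere_dense_in X N \<longleftrightarrow> N \<subseteq> topspace X \<and> X interior_of (X closure_of N) = {}"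

definition discrete_subspace :: "'x topology \<Rightarrow> 'x set \<Rightarrow> bool" where
  "discrete_subspace X D \<longleftrightarrow> D \<subseteq> topspace X \<and> subtopology X D = discrete_topology D"

definition dense_in :: "'x topology \<Rightarrow> 'x set \<Rightarrow> bool" where
  "dense_in X D \<longleftrightarrow> D \<subseteq> topspace X \<and> X closure_of D = topspace X"

definition d_separable :: "'x topology \<Rightarrow> bool" where
  "d_separable X \<longleftrightarrow> (\<exists>N::nat \<Rightarrow> 'x set. dense_in X (\<Union>(range N))
      \<and> (\<forall>n. discrete_subspace X (N n)))"

definition nwd_separable :: "'x topology \<Rightarrow> bool" where
  "nwd_separable X \<longleftrightarrow> (\<exists>N::nat \<Rightarrow> 'x set. dense_in X (\<Union>(range N))
      \<and> (\<forall>n. nowhere_dense_in X (N n)))"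

end

theory Submission
  imports Defs
begin


lemma ub_countable:
  assumes om: "omega1_like TYPE('a::{wellorder,linorder_topology})" and c: "countable (S::'a set)"
  shows "\<exists>b. \<forall>x\<in>S. x < b"
proof -
  have ci: "countable {..<x}" for x::'a using om unfolding omega1_like_def by blast
  have cu: "countable (\<Union>x\<in>S. insert x {..<x})"
    by (rule countable_UN[OF c]) (simp add: ci)
  have u: "uncountable (UNIV::'a set)" using om unfolding omega1_like_def by blast
  have "(\<Union>x\<in>S. insert x {..<x}) \<noteq> UNIV" using cu u by metis
  then obtain b where b: "b \<notin> (\<Union>x\<in>S. insert x {..<x})" by blast
  show ?thesis
  proof (intro exI ballI)
    fix x assume "x \<in> S"
    then have "b \<noteq> x" "\<not> b < x" using b by auto
    then show "x < b" by auto
  qed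
qed

lemma unbounded_stat:
  assumes om: "omega1_like TYPE('a::{wellorder,linorder_topology})" and st: "stationary (A::'a set)"
  shows "\<exists>a\<in>A. b < a"
proof -
  obtain c where c: "b < c" using ub_countable[OF om, of "{b}"] by auto
  have "club {c..}" unfolding club_def
  proof
    show "closed {c..}" by simp
    show "\<forall>x. \<exists>y\<in>{c..}. x < y"
    proof
      fix x obtain y where "\<forall>z\<in>{x,c}. z < y" using ub_countable[OF om, of "{x,c}"] by auto
      then show "\<exists>y\<in>{c..}. x < y" by auto
    qed
  qed
  then obtain a where "a \<in> A" "a \<in> {c..}" using st unfolding stationary_def by blast
  then show ?thesis using c by (auto intro: less_le_trans)
qed

lemma ip_refl: "initial_part s s" unfolding initial_part_def by auto
lemma ip_trans: assumes rs: "initial_part r s" and st: "initial_part s t" shows "initial_part r t"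
  unfolding initial_part_def
proof (intro conjI ballI impI)
  show "r \<subseteq> t" using rs st unfolding initial_part_def by (meson order_trans)
  fix x y assume x: "x \<in> r" and y: "y \<in> t" "y \<le> x"
  have "x \<in> s" using x rs unfolding initial_part_def by blast
  then have "y \<in> s" using st y unfolding initial_part_def by blast
  then show "y \<in> r" using rs x y unfolding initial_part_def by blast
qed
lemma ip_comp:
  fixes r s t :: "'a::linorder set"
  assumes rt: "initial_part r t" and st: "initial_part s t" shows "initial_part r s \<or> initial_part s r"
proof (cases "r \<subseteq> s")
  case True
  have "initial_part r s" unfolding initial_part_def
  proof (intro conjI ballI impI)
    show "r \<subseteq> s" by fact
    fix u v assume "u \<in> r" "v \<in> s" "v \<le> u"
    have "v \<in> t" using \<open>v \<in> s\<close> st unfolding initial_part_def by blast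
    then show "v \<in> r" using rt \<open>u \<in> r\<close> \<open>v \<le> u\<close> unfolding initial_part_def by blast
  qed
  then show ?thesis by blast
next
  case False
  then obtain x where x: "x \<in> r" "x \<notin> s" by auto
  have xt: "x \<in> t" using x rt unfolding initial_part_def by blast
  have "s \<subseteq> r"
  proof
    fix y assume y: "y \<in> s"
    have yt: "y \<in> t" using y st unfolding initial_part_def by blast
    show "y \<in> r"
    proof (cases "y \<le> x")
      case True then show ?thesis using rt x yt unfolding initial_part_def by blast
    next
      case False then have "x \<le> y" by auto
      then have "x \<in> s" using st y xt unfolding initial_part_def by blast
      then show ?thesis using x by blast
    qed
  qed
  have "initial_part s r" unfolding initial_part_def
  proof (intro conjI ballI impI)
    show "s \<subseteq> r" by fact
    fix u v assume "u \<in> s" "v \<in> r" "v \<le> u"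
    have "v \<in> t" using \<open>v \<in> r\<close> rt unfolding initial_part_def by blast
    then show "v \<in> s" using st \<open>u \<in> s\<close> \<open>v \<le> u\<close> unfolding initial_part_def by blast
  qed
  then show ?thesis by blast
qed
lemma ip_ext: "(\<forall>x\<in>s. x < (a::'a::linorder)) \<Longrightarrow> initial_part s (insert a s)"
  unfolding initial_part_def using leD by fastforce
lemma ip_sub: "initial_part s t \<Longrightarrow> s \<subseteq> t" unfolding initial_part_def by auto

lemma T_insert: "s \<in> ccs_tree A \<Longrightarrow> a \<in> A \<Longrightarrow> insert a s \<in> ccs_tree A"
  unfolding ccs_tree_def by auto

lemma T_countable: "s \<in> ccs_tree A \<Longrightarrow> countable s" unfolding ccs_tree_def by auto



definition nxt :: "'a::wellorder set \<Rightarrow> 'a \<Rightarrow> 'a set \<times> 'a set \<Rightarrow> 'a" where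
  "nxt A g st = (LEAST x. x \<in> A \<and> g < x \<and> (\<forall>y\<in>fst st \<union> snd st. y < x))"

definition gstep :: "'a::{wellorder,linorder_topology} set \<Rightarrow> (nat \<Rightarrow> ('a set \<times> 'a set) set) \<Rightarrow> nat \<Rightarrow> 'a \<Rightarrow> 'a set \<times> 'a set \<Rightarrow> 'a set \<times> 'a set" where
  "gstep A E n g st = (SOME st'. fst st' \<in> ccs_tree A \<and> snd st' \<in> ccs_tree A
     \<and> initial_part (insert (nxt A g st) (fst st)) (fst st')
     \<and> initial_part (insert (nxt A g st) (snd st)) (snd st') \<and> st' \<in> E n)"

primrec chn :: "'a::{wellorder,linorder_topology} set \<Rightarrow> (nat \<Rightarrow> ('a set \<times> 'a set) set) \<Rightarrow> (nat \<Rightarrow> 'a) \<Rightarrow> nat \<Rightarrow> 'a set \<times> 'a set" where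
  "chn A E e 0 = ({}, {})"
| "chn A E e (Suc k) = gstep A E k (e k) (chn A E e k)"

lemma chn_cong: "(\<forall>i<k. e i = e' i) \<Longrightarrow> chn A E e k = chn A E e' k"
  by (induction k) auto

locale dist =
  fixes A :: "'a::{wellorder,linorder_topology} set" and E :: "nat \<Rightarrow> ('a set \<times> 'a set) set"
  assumes om: "omega1_like TYPE('a)" and st: "stationary A"
    and Ed: "\<And>n s t. s \<in> ccs_tree A \<Longrightarrow> t \<in> ccs_tree A \<Longrightarrow> \<exists>s' t'. s' \<in> ccs_tree A \<and> t' \<in> ccs_tree A
        \<and> initial_part s s' \<and> initial_part t t' \<and> (s',t') \<in> E n"
begin

lemma nxt_prop:
  assumes "fst st \<in> ccs_tree A" "snd st \<in> ccs_tree A"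
  shows "nxt A g st \<in> A \<and> g < nxt A g st \<and> (\<forall>y\<in>fst st \<union> snd st. y < nxt A g st)"
proof -
  have "countable (insert g (fst st \<union> snd st))" using assms T_countable by auto
  then obtain b where b: "\<forall>x\<in>insert g (fst st \<union> snd st). x < b" using ub_countable[OF om] by blast
  obtain a where a: "a \<in> A" "b < a" using unbounded_stat[OF om st] by blast
  have "a \<in> A \<and> g < a \<and> (\<forall>y\<in>fst st \<union> snd st. y < a)" using a b by (auto intro: less_trans)
  then show ?thesis unfolding nxt_def by (rule LeastI)
qed

lemma gstep_prop:
  assumes "fst st \<in> ccs_tree A" "snd st \<in> ccs_tree A"
  shows "fst (gstep A E n g st) \<in> ccs_tree A \<and> snd (gstep A E n g st) \<in> ccs_tree A
     \<and> initial_part (insert (nxt A g st) (fst st)) (fst (gstep A E n g st))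
     \<and> initial_part (insert (nxt A g st) (snd st)) (snd (gstep A E n g st)) \<and> gstep A E n g st \<in> E n"
proof -
  let ?a = "nxt A g st"
  have "insert ?a (fst st) \<in> ccs_tree A" "insert ?a (snd st) \<in> ccs_tree A"
    using nxt_prop[OF assms, of g] assms by (auto intro: T_insert)
  from Ed[OF this, of n] obtain s' t' where
    "s' \<in> ccs_tree A \<and> t' \<in> ccs_tree A \<and> initial_part (insert ?a (fst st)) s'
       \<and> initial_part (insert ?a (snd st)) t' \<and> (s',t') \<in> E n" by blast
  then have "\<exists>st'. fst st' \<in> ccs_tree A \<and> snd st' \<in> ccs_tree A
     \<and> initial_part (insert ?a (fst st)) (fst st')
     \<and> initial_part (insert ?a (snd st)) (snd st') \<and> st' \<in> E n"
    by (intro exI[of _ "(s',t')"]) auto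
  then show ?thesis unfolding gstep_def by (rule someI_ex)
qed

lemma empty_T: "{} \<in> ccs_tree A" unfolding ccs_tree_def by auto

lemma chn_T: "fst (chn A E e k) \<in> ccs_tree A \<and> snd (chn A E e k) \<in> ccs_tree A"
  by (induction k) (auto simp: empty_T gstep_prop)

lemma chn_step:
  "\<exists>a. a \<in> A \<and> e k < a \<and> a \<in> fst (chn A E e (Suc k)) \<and> a \<in> snd (chn A E e (Suc k))
    \<and> initial_part (fst (chn A E e k)) (fst (chn A E e (Suc k)))
    \<and> initial_part (snd (chn A E e k)) (snd (chn A E e (Suc k))) \<and> chn A E e (Suc k) \<in> E k"
proof -
  let ?st = "chn A E e k"
  let ?a = "nxt A (e k) ?st"
  have T: "fst ?st \<in> ccs_tree A" "snd ?st \<in> ccs_tree A" using chn_T by auto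
  note n = nxt_prop[OF T, of "e k"]
  note g = gstep_prop[OF T, of k "e k"]
  have i1: "initial_part (fst ?st) (insert ?a (fst ?st))" "initial_part (snd ?st) (insert ?a (snd ?st))"
    using n by (auto intro: ip_ext)
  have g1: "initial_part (insert ?a (fst ?st)) (fst (chn A E e (Suc k)))"
    and g2: "initial_part (insert ?a (snd ?st)) (snd (chn A E e (Suc k)))"
    and g3: "chn A E e (Suc k) \<in> E k" using g by simp_all
  have a1: "?a \<in> fst (chn A E e (Suc k))" using ip_sub[OF g1] by blast
  have a2: "?a \<in> snd (chn A E e (Suc k))" using ip_sub[OF g2] by blast
  show ?thesis
    apply (rule exI[of _ ?a])
    using n a1 a2 g3 ip_trans[OF i1(1) g1] ip_trans[OF i1(2) g2] by blast
qed

lemma chn_mono: "k \<le> j \<Longrightarrow> initial_part (fst (chn A E e k)) (fst (chn A E e j))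
   \<and> initial_part (snd (chn A E e k)) (snd (chn A E e j))"
proof (induction j rule: dec_induct)
  case base then show ?case by (simp add: ip_refl)
next
  case (step j) then show ?case using chn_step[of e j] ip_trans by blast
qed

definition Reach :: "'a \<Rightarrow> ('a set \<times> 'a set) set" where
  "Reach g = {chn A E e k | e k. \<forall>i<k. e i \<le> g}"

lemma Reach_countable: "countable (Reach g)"
proof -
  have "Reach g \<subseteq> (\<lambda>xs. chn A E (\<lambda>i. xs ! i) (length xs)) ` lists {..g}"
  proof
    fix r assume "r \<in> Reach g"
    then obtain e k where r: "r = chn A E e k" "\<forall>i<k. e i \<le> g" unfolding Reach_def by blast
    let ?xs = "map e [0..<k]"
    have "chn A E e k = chn A E (\<lambda>i. ?xs ! i) (length ?xs)"
      using chn_cong[of k e "\<lambda>i. ?xs ! i"] by simp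
    moreover have "?xs \<in> lists {..g}" using r by auto
    ultimately show "r \<in> (\<lambda>xs. chn A E (\<lambda>i. xs ! i) (length xs)) ` lists {..g}" using r by blast
  qed
  moreover have "countable {..g}"
  proof -
    have "{..g} = insert g {..<g}" by auto
    then show ?thesis using om unfolding omega1_like_def by simp
  qed
  ultimately show ?thesis by (meson countable_image countable_lists countable_subset)
qed

definition U :: "'a \<Rightarrow> 'a set" where "U g = (\<Union>r\<in>Reach g. fst r \<union> snd r)"

lemma U_countable: "countable (U g)"
  unfolding U_def
proof (rule countable_UN[OF Reach_countable])
  fix r assume "r \<in> Reach g"
  then obtain e k where "r = chn A E e k" unfolding Reach_def by blast
  then show "countable (fst r \<union> snd r)" using chn_T[of e k] T_countable by auto
qed

definition B :: "'a \<Rightarrow> 'a" where "B g = (SOME b. \<forall>x\<in>U g. x < b)"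

lemma B_prop: "x \<in> U g \<Longrightarrow> x < B g"
proof -
  have "\<exists>b. \<forall>x\<in>U g. x < b" using ub_countable[OF om U_countable] .
  then have "\<forall>x\<in>U g. x < B g" unfolding B_def by (rule someI_ex)
  then show "x \<in> U g \<Longrightarrow> x < B g" by blast
qed

lemma B_gt: "\<exists>a. g < a \<and> a < B g"
proof -
  obtain a where a: "g < a" "a \<in> fst (chn A E (\<lambda>_. g) (Suc 0))"
    using chn_step[of "\<lambda>_. g" 0] by auto
  have "chn A E (\<lambda>_. g) (Suc 0) \<in> Reach g" unfolding Reach_def by blast
  then have "a \<in> U g" using a unfolding U_def by blast
  then show ?thesis using a B_prop by blast
qed

end


lemma sup_ip:
  fixes S :: "nat \<Rightarrow> 'a::linorder set"
  assumes mono: "\<And>k j. k \<le> j \<Longrightarrow> initial_part (S k) (S j)"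
    and bd: "\<And>k x. x \<in> S k \<Longrightarrow> x < d"
  shows "initial_part (S k) ((\<Union>k. S k) \<union> {d})"
  unfolding initial_part_def
proof (intro conjI ballI impI)
  show "S k \<subseteq> (\<Union>k. S k) \<union> {d}" by blast
  fix x y assume x: "x \<in> S k" and y: "y \<in> (\<Union>k. S k) \<union> {d}" and yx: "y \<le> x"
  have "x < d" using bd x by blast
  then have "y \<noteq> d" using yx by auto
  then obtain j where j: "y \<in> S j" using y by blast
  show "y \<in> S k"
  proof (cases "j \<le> k")
    case True then show ?thesis using mono[OF True] j ip_sub by blast
  next
    case False then have "k \<le> j" by auto
    from mono[OF this] show ?thesis using x j yx unfolding initial_part_def by blast
  qed
qed

lemma sup_compact:
  fixes S :: "nat \<Rightarrow> 'a::linorder_topology set"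
  assumes mono: "\<And>k j. k \<le> j \<Longrightarrow> initial_part (S k) (S j)"
    and bd: "\<And>k x. x \<in> S k \<Longrightarrow> x < d"
    and cof: "\<And>b. b < d \<Longrightarrow> \<exists>k. \<exists>x\<in>S k. b < x"
    and comp: "\<And>k. compact (S k)"
    and ex: "y0 < d"
  shows "compact ((\<Union>k. S k) \<union> {d})"
proof (rule compactI)
  fix C assume Co: "\<forall>t\<in>C. open t" and Cc: "(\<Union>k. S k) \<union> {d} \<subseteq> \<Union>C"
  then obtain W where W: "W \<in> C" "d \<in> W" by blast
  then have "open W" using Co by blast
  from open_left[OF this W(2) ex] obtain b where b: "b < d" "{b<..d} \<subseteq> W" by blast
  obtain k x where kx: "x \<in> S k" "b < x" using cof[OF b(1)] by blast
  have sub: "(\<Union>k. S k) \<union> {d} \<subseteq> S k \<union> {b<..d}"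
  proof
    fix y assume y: "y \<in> (\<Union>k. S k) \<union> {d}"
    show "y \<in> S k \<union> {b<..d}"
    proof (cases "b < y")
      case True
      have "y \<le> d" using y bd by (auto simp: less_imp_le)
      then show ?thesis using True by auto
    next
      case False
      then have yb: "y \<le> b" by auto
      then have "y \<noteq> d" using b by auto
      then obtain j where j: "y \<in> S j" using y by blast
      have "y \<le> x" using yb kx by auto
      have "y \<in> S k"
      proof (cases "j \<le> k")
        case True then show ?thesis using mono[OF True] j ip_sub by blast
      next
        case False then have "k \<le> j" by auto
        from mono[OF this] show ?thesis using kx j \<open>y \<le> x\<close> unfolding initial_part_def by blast
      qed
      then show ?thesis by blast
    qed
  qed
  have skC: "S k \<subseteq> \<Union>C" using Cc by blast
  have opC: "\<And>B. B \<in> C \<Longrightarrow> open B" using Co by blast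
  obtain D where D: "D \<subseteq> C" "finite D" "S k \<subseteq> \<Union>D"
    by (rule compactE[OF comp[of k] skC opC])
  have "S k \<union> {b<..d} \<subseteq> \<Union>(insert W D)" using D(3) b(2) by auto
  with sub have fin: "(\<Union>k. S k) \<union> {d} \<subseteq> \<Union>(insert W D)" by (rule subset_trans)
  show "\<exists>C'\<subseteq>C. finite C' \<and> (\<Union>k. S k) \<union> {d} \<subseteq> \<Union>C'"
  proof (intro exI conjI)
    show "insert W D \<subseteq> C" using D(1) W(1) by simp
    show "finite (insert W D)" using D(2) by simp
    show "(\<Union>k. S k) \<union> {d} \<subseteq> \<Union>(insert W D)" by (rule fin)
  qed
qed

context dist begin

definition C :: "'a \<Rightarrow> 'a set" where "C c = {d. c \<le> d \<and> (\<forall>g<d. B g \<le> d)}"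

lemma C_closed: "closed (C c)"
  unfolding closed_def
proof (subst open_subopen, intro ballI)
  fix d assume "d \<in> - C c"
  then have "\<not> c \<le> d \<or> (\<exists>g<d. \<not> B g \<le> d)" unfolding C_def by blast
  then show "\<exists>T. open T \<and> d \<in> T \<and> T \<subseteq> - C c"
  proof
    assume "\<not> c \<le> d"
    then show ?thesis by (intro exI[of _ "{..<c}"]) (auto simp: C_def)
  next
    assume "\<exists>g<d. \<not> B g \<le> d"
    then obtain g where g: "g < d" "d < B g" by auto
    show ?thesis
    proof (intro exI[of _ "{g<..<B g}"] conjI)
      show "open {g<..<B g}" by simp
      show "d \<in> {g<..<B g}" using g by simp
      show "{g<..<B g} \<subseteq> - C c" unfolding C_def using leD by fastforce
    qed
  qed
qed

lemma countable_atMost: "countable {..x::'a}"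
proof -
  have "{..x} = insert x {..<x}" by auto
  then show ?thesis using om unfolding omega1_like_def by simp
qed

lemma C_unbounded: "\<exists>y\<in>C c. x < y"
proof -
  have e0: "\<exists>b. x < b \<and> c < b" using ub_countable[OF om, of "{x,c}"] by auto
  have eS: "\<exists>b. y < b \<and> (\<forall>g\<le>y. B g < b)" for y
  proof -
    have "countable (insert y (B ` {..y}))" using countable_atMost by simp
    from ub_countable[OF om this] show ?thesis by auto
  qed
  define f where "f = rec_nat (SOME b. x < b \<and> c < b) (\<lambda>n y. SOME b. y < b \<and> (\<forall>g\<le>y. B g < b))"
  have f0: "x < f 0 \<and> c < f 0" unfolding f_def using someI_ex[OF e0] by simp
  have fS: "f n < f (Suc n) \<and> (\<forall>g\<le>f n. B g < f (Suc n))" for n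
    unfolding f_def using someI_ex[OF eS] by simp
  have "countable (range f)" by simp
  from ub_countable[OF om this] obtain b where b: "\<forall>y\<in>range f. y < b" by blast
  define d where "d = (LEAST z. \<forall>n. f n \<le> z)"
  have dub: "\<forall>n. f n \<le> d" unfolding d_def by (rule LeastI[of _ b]) (use b in \<open>auto intro: less_imp_le\<close>)
  have "d \<in> C c" unfolding C_def
  proof (intro CollectI conjI allI impI)
    show "c \<le> d" using f0 dub by (meson less_imp_le order_trans)
    fix g assume "g < d"
    have "\<exists>n. g < f n"
    proof (rule ccontr)
      assume "\<not> (\<exists>n. g < f n)"
      then have "\<forall>n. f n \<le> g" by (auto simp: not_less)
      then have "d \<le> g" unfolding d_def by (rule Least_le)
      then show False using \<open>g < d\<close> by auto
    qed
    then obtain n where "g < f n" by blast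
    then have "B g < f (Suc n)" using fS[of n] by (auto simp: less_imp_le)
    then show "B g \<le> d" using dub by (meson less_imp_le order_trans)
  qed
  moreover have "x < d" using f0 dub by (meson less_le_trans)
  ultimately show ?thesis by blast
qed

lemma C_club: "club (C c)" unfolding club_def using C_closed C_unbounded by blast

theorem dist_main: "\<exists>sw tw. sw \<in> ccs_tree A \<and> tw \<in> ccs_tree A \<and>
   (\<forall>n. \<exists>s' t'. (s',t') \<in> E n \<and> initial_part s' sw \<and> initial_part t' tw)"
proof -
  obtain z :: 'a where "True" by blast
  obtain c where zc: "z < c" using ub_countable[OF om, of "{z}"] by auto
  obtain d where d: "d \<in> A" "d \<in> C c" using st C_club[of c] unfolding stationary_def by blast
  have dne: "{..<d} \<noteq> {}" using zc d(2) unfolding C_def by (auto intro: less_le_trans)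
  have dc: "countable {..<d}" using om unfolding omega1_like_def by blast
  define e where "e = from_nat_into {..<d}"
  have ed: "e k < d" for k unfolding e_def using from_nat_into[OF dne] by simp
  have esurj: "\<exists>k. e k = b" if "b < d" for b
    using range_from_nat_into[OF dne dc] that unfolding e_def by (metis lessThan_iff rangeE)
  let ?s = "\<lambda>k. fst (chn A E e k)" and ?t = "\<lambda>k. snd (chn A E e k)"
  have bd: "x < d" if "x \<in> ?s k \<union> ?t k" for x k
  proof -
    define m where "m = Max (insert (e 0) (e ` {..<k}))"
    have fin: "finite (insert (e 0) (e ` {..<k}))" by simp
    have "m \<in> insert (e 0) (e ` {..<k})" unfolding m_def by (rule Max_in[OF fin]) simp
    then have md: "m < d" using ed by auto
    have "\<forall>i<k. e i \<le> m" unfolding m_def using Max_ge[OF fin] by simp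
    then have "chn A E e k \<in> Reach m" unfolding Reach_def by blast
    then have "x \<in> U m" using that unfolding U_def by blast
    then have "x < B m" by (rule B_prop)
    moreover have "B m \<le> d" using d(2) md unfolding C_def by blast
    ultimately show ?thesis by (rule less_le_trans)
  qed
  have cof: "\<exists>k. (\<exists>x\<in>?s k. b < x) \<and> (\<exists>x\<in>?t k. b < x)" if bd0: "b < d" for b
  proof -
    obtain i where i: "e i = b" using esurj[OF bd0] by blast
    from chn_step[of e i] i show ?thesis by blast
  qed
  have mnS: "initial_part (?s k) (?s j)" and mnT: "initial_part (?t k) (?t j)" if "k \<le> j" for k j
    using chn_mono[OF that, of e] by auto
  define sw where "sw = (\<Union>k. ?s k) \<union> {d}"
  define tw where "tw = (\<Union>k. ?t k) \<union> {d}"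
  have inT: "(\<Union>k. S k) \<union> {d} \<in> ccs_tree A"
    if mono: "\<And>k j. k \<le> j \<Longrightarrow> initial_part (S k) (S j)"
    and bd: "\<And>k x. x \<in> S k \<Longrightarrow> x < d"
    and cof: "\<And>b. b < d \<Longrightarrow> \<exists>k. \<exists>x\<in>S k. b < x"
    and T: "\<And>k. S k \<in> ccs_tree A" for S :: "nat \<Rightarrow> 'a set"
  proof -
    have "compact ((\<Union>k. S k) \<union> {d})"
      by (rule sup_compact[of S d, OF mono bd cof]) (use T zc d(2) in \<open>auto simp: ccs_tree_def C_def intro: less_le_trans\<close>)
    moreover have "(\<Union>k. S k) \<union> {d} \<subseteq> A" using T d(1) unfolding ccs_tree_def by blast
    moreover have "countable ((\<Union>k. S k) \<union> {d})" using T unfolding ccs_tree_def by auto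
    ultimately show ?thesis unfolding ccs_tree_def by blast
  qed
  have swT: "sw \<in> ccs_tree A" unfolding sw_def
    by (rule inT) (use mnS bd cof chn_T in \<open>blast+\<close>)
  have twT: "tw \<in> ccs_tree A" unfolding tw_def
    by (rule inT) (use mnT bd cof chn_T in \<open>blast+\<close>)
  have "\<forall>n. \<exists>s' t'. (s',t') \<in> E n \<and> initial_part s' sw \<and> initial_part t' tw"
  proof
    fix n
    have "chn A E e (Suc n) \<in> E n" using chn_step[of e n] by blast
    moreover have "initial_part (?s (Suc n)) sw" unfolding sw_def
      by (rule sup_ip) (use mnS bd in blast)+
    moreover have "initial_part (?t (Suc n)) tw" unfolding tw_def
      by (rule sup_ip) (use mnT bd in blast)+
    ultimately show "\<exists>s' t'. (s',t') \<in> E n \<and> initial_part s' sw \<and> initial_part t' tw"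
      by (intro exI[of _ "?s (Suc n)"] exI[of _ "?t (Suc n)"]) simp
  qed
  then show ?thesis using swT twT by blast
qed

end


lemma path_sub: "p \<in> tree_paths T \<Longrightarrow> p \<subseteq> T" unfolding tree_paths_def by simp
lemma path_down: "p \<in> tree_paths T \<Longrightarrow> t \<in> p \<Longrightarrow> s \<in> T \<Longrightarrow> initial_part s t \<Longrightarrow> s \<in> p"
  unfolding tree_paths_def by simp
lemma path_lin: "p \<in> tree_paths T \<Longrightarrow> s \<in> p \<Longrightarrow> t \<in> p \<Longrightarrow> initial_part s t \<or> initial_part t s"
  unfolding tree_paths_def by simp
lemma pathI: "p \<subseteq> T \<Longrightarrow> (\<And>t s. t \<in> p \<Longrightarrow> s \<in> T \<Longrightarrow> initial_part s t \<Longrightarrow> s \<in> p)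
  \<Longrightarrow> (\<And>s t. s \<in> p \<Longrightarrow> t \<in> p \<Longrightarrow> initial_part s t \<or> initial_part t s) \<Longrightarrow> p \<in> tree_paths T"
  unfolding tree_paths_def by simp

lemma path_K:
  fixes p :: "'a::linorder set set"
  assumes p: "p \<in> tree_paths T" and t: "t \<in> p" and x: "x \<in> t" and y: "y \<in> \<Union>p" and yx: "y \<le> x"
  shows "y \<in> t"
proof -
  obtain t' where t': "t' \<in> p" "y \<in> t'" using y by blast
  from path_lin[OF p t'(1) t] show ?thesis
  proof
    assume "initial_part t' t" then show ?thesis using t' ip_sub by blast
  next
    assume "initial_part t t'" then show ?thesis using x t' yx unfolding initial_part_def by blast
  qed
qed

lemma path_countable:
  fixes A :: "'a::{wellorder,linorder_topology} set"
  assumes om: "omega1_like TYPE('a)" and stc: "stationary (- A)" and p: "p \<in> tree_paths (ccs_tree A)"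
  shows "countable p"
proof -
  let ?U = "\<Union>p"
  have pT: "p \<subseteq> ccs_tree A" using path_sub[OF p] .
  have catm: "countable {..w::'a}" for w
  proof -
    have "{..w} = insert w {..<w}" by auto
    then show ?thesis using om unfolding omega1_like_def by simp
  qed
  show ?thesis
  proof (cases "countable ?U")
    case True
    have "p \<subseteq> insert {} ((\<lambda>m. ?U \<inter> {..m}) ` ?U)"
    proof
      fix t assume t: "t \<in> p"
      show "t \<in> insert {} ((\<lambda>m. ?U \<inter> {..m}) ` ?U)"
      proof (cases "t = {}")
        case False
        have "compact t" using t pT unfolding ccs_tree_def by blast
        from compact_attains_sup[OF this False] obtain m where m: "m \<in> t" "\<forall>x\<in>t. x \<le> m" by blast
        have "t = ?U \<inter> {..m}"
        proof
          show "t \<subseteq> ?U \<inter> {..m}" using m(2) t by auto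
          show "?U \<inter> {..m} \<subseteq> t"
          proof
            fix y assume "y \<in> ?U \<inter> {..m}"
            then show "y \<in> t" using path_K[OF p t m(1), of y] by simp
          qed
        qed
        moreover have "m \<in> ?U" using m t by blast
        ultimately show ?thesis by blast
      qed simp
    qed
    moreover have "countable (insert {} ((\<lambda>m. ?U \<inter> {..m}) ` ?U))" using True by simp
    ultimately show ?thesis by (rule countable_subset)
  next
    case False
    have unb: "\<forall>w. \<exists>y\<in>?U. w < y"
    proof (rule ccontr)
      assume "\<not> (\<forall>w. \<exists>y\<in>?U. w < y)"
      then obtain w where "\<forall>y\<in>?U. \<not> w < y" by blast
      then have "?U \<subseteq> {..w}" by (auto simp: not_less)
      from countable_subset[OF this catm] show False using False by simp
    qed
    have cl: "closed ?U"
      unfolding closed_def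
    proof (subst open_subopen, intro ballI)
      fix z assume z: "z \<in> - ?U"
      have "\<exists>y\<in>?U. z < y" using unb by (rule spec)
      then obtain x where x: "x \<in> ?U" "z < x" ..
      then obtain t where t: "t \<in> p" "x \<in> t" by blast
      have "compact t" using t pT unfolding ccs_tree_def by blast
      then have ct: "closed t" by (rule compact_imp_closed)
      show "\<exists>T. open T \<and> z \<in> T \<and> T \<subseteq> - ?U"
      proof (intro exI conjI)
        show "open ({..<x} - t)" using ct by (intro open_Diff) simp_all
        show "z \<in> {..<x} - t" using z x t by auto
        show "{..<x} - t \<subseteq> - ?U"
        proof
          fix y assume y: "y \<in> {..<x} - t"
          show "y \<in> - ?U"
          proof
            assume yU: "y \<in> ?U"
            have "y \<le> x" using y by (simp add: less_imp_le)
            from path_K[OF p t(1) t(2) yU this] have "y \<in> t" .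
            then show False using y by blast
          qed
        qed
      qed
    qed
    have "club ?U" unfolding club_def using cl unb by blast
    then have "- A \<inter> ?U \<noteq> {}" using stc unfolding stationary_def by blast
    moreover have "?U \<subseteq> A" using pT unfolding ccs_tree_def by blast
    ultimately show ?thesis by blast
  qed
qed

lemma chain_max:
  fixes F :: "'a::linorder set set"
  assumes "finite F" "F \<noteq> {}" "\<And>a b. a \<in> F \<Longrightarrow> b \<in> F \<Longrightarrow> initial_part a b \<or> initial_part b a"
  shows "\<exists>m\<in>F. \<forall>a\<in>F. initial_part a m"
  using assms
proof (induction F rule: finite_ne_induct)
  case (singleton x) then show ?case by (simp add: ip_refl)
next
  case (insert x F)
  then obtain m where m: "m \<in> F" "\<forall>a\<in>F. initial_part a m" by blast
  have "initial_part m x \<or> initial_part x m" using insert.prems m(1) by blast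
  then show ?case
  proof
    assume mx: "initial_part m x"
    show ?thesis using mx m ip_trans ip_refl by (intro bexI[of _ x]) blast+
  next
    assume "initial_part x m"
    then show ?thesis using m by (intro bexI[of _ m]) auto
  qed
qed



locale ps =
  fixes A :: "'a::{wellorder,linorder_topology} set"
  assumes om: "omega1_like TYPE('a)" and st: "stationary A"
begin

definition chi :: "'a set set \<Rightarrow> ('a set \<Rightarrow> bool)" where
  "chi p = restrict (\<lambda>t. t \<in> p) (ccs_tree A)"

abbreviation "TT \<equiv> ccs_tree A"
abbreviation "PT \<equiv> tree_paths (ccs_tree A)"
abbreviation "PP \<equiv> product_topology (\<lambda>_. discrete_topology (UNIV::bool set)) (ccs_tree A)"
abbreviation "XX \<equiv> path_space (ccs_tree A)"

lemma XX_eq: "XX = subtopology PP (chi ` PT)"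
  unfolding path_space_def chi_def by simp

lemma chi_PiE: "chi p \<in> PiE TT (\<lambda>_. UNIV)" unfolding chi_def by simp

lemma topX: "topspace XX = chi ` PT"
  unfolding XX_eq using chi_PiE by auto

lemma chi_app: "t \<in> TT \<Longrightarrow> chi p t = (t \<in> p)" unfolding chi_def by simp

definition cyl :: "'a set \<Rightarrow> ('a set \<Rightarrow> bool) set" where
  "cyl s = {x \<in> topspace XX. x s}"

lemma cyl_open: assumes s: "s \<in> TT" shows "openin XX (cyl s)"
proof -
  have "openin PP {x \<in> topspace PP. x s \<in> {True}}"
    by (rule openin_continuous_map_preimage[OF continuous_map_product_projection[OF s]]) simp
  then have "openin XX (chi ` PT \<inter> {x \<in> topspace PP. x s \<in> {True}})"
    unfolding XX_eq by (rule openin_subtopology_Int2)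
  moreover have "chi ` PT \<inter> {x \<in> topspace PP. x s \<in> {True}} = cyl s"
    unfolding cyl_def topX using chi_PiE by auto
  ultimately show ?thesis by simp
qed

lemma cyl_mem: "s \<in> TT \<Longrightarrow> p \<in> PT \<Longrightarrow> (chi p \<in> cyl s) = (s \<in> p)"
  unfolding cyl_def topX by (auto simp: chi_app)

lemma cyl_sub: "cyl s \<subseteq> topspace XX" unfolding cyl_def by blast

lemma cyl_elem: assumes "x \<in> cyl s" obtains q where "q \<in> PT" "x = chi q"
  using assms unfolding cyl_def topX by blast

lemma cyl_mono: assumes s: "s \<in> TT" and s': "s' \<in> TT" and ss: "initial_part s s'"
  shows "cyl s' \<subseteq> cyl s"
proof
  fix x assume x: "x \<in> cyl s'"
  then obtain q where q: "q \<in> PT" "x = chi q" by (rule cyl_elem)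
  then have "s' \<in> q" using x cyl_mem[OF s'] by simp
  then have "s \<in> q" using path_down[OF q(1) _ s ss] by simp
  then show "x \<in> cyl s" using q cyl_mem[OF s] by simp
qed

definition down :: "'a set \<Rightarrow> 'a set set" where "down s = {r \<in> TT. initial_part r s}"

lemma down_path: assumes s: "s \<in> TT" shows "down s \<in> PT"
proof (rule pathI)
  show "down s \<subseteq> TT" unfolding down_def by blast
  show "r \<in> down s" if "t \<in> down s" "r \<in> TT" "initial_part r t" for t r
    using that ip_trans unfolding down_def by blast
  show "initial_part r t \<or> initial_part t r" if "r \<in> down s" "t \<in> down s" for r t
    using that ip_comp unfolding down_def by blast
qed

lemma cyl_ne: "s \<in> TT \<Longrightarrow> chi (down s) \<in> cyl s"
  using cyl_mem[OF _ down_path] by (simp add: down_def ip_refl)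

lemma L1:
  assumes s: "s \<in> TT" and U: "openin XX U" and p: "p \<in> PT" and pU: "chi p \<in> U" and sp: "s \<in> p"
  shows "\<exists>s'. s' \<in> TT \<and> initial_part s s' \<and> cyl s' \<subseteq> U"
proof -
  obtain W where W: "openin PP W" "U = W \<inter> chi ` PT"
    using U unfolding XX_eq openin_subtopology by blast
  have "chi p \<in> W" using pU W by blast
  with W(1) obtain V where V: "finite {i \<in> TT. V i \<noteq> UNIV}" "chi p \<in> PiE TT V" "PiE TT V \<subseteq> W"
    unfolding openin_product_topology_alt by force
  define F where "F = {i \<in> TT. V i \<noteq> UNIV}"
  have pT: "p \<subseteq> TT" using path_sub[OF p] .
  define G where "G = insert s (F \<inter> p)"
  have Gp: "G \<subseteq> p" unfolding G_def using sp by blast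
  have "finite G" unfolding G_def F_def using V(1) by simp
  moreover have "G \<noteq> {}" unfolding G_def by blast
  moreover have "initial_part a b \<or> initial_part b a" if "a \<in> G" "b \<in> G" for a b
    using path_lin[OF p] that Gp by blast
  ultimately obtain m where m: "m \<in> G" "\<forall>a\<in>G. initial_part a m" using chain_max by metis
  have mp: "m \<in> p" using m Gp by blast
  have mT: "m \<in> TT" using mp pT by blast
  have FT: "F \<subseteq> TT" unfolding F_def by blast
  have "countable (\<Union>c\<in>insert m F. c)"
  proof (rule countable_UN)
    show "countable (insert m F)" using V(1) unfolding F_def by (simp add: countable_finite)
    show "countable c" if "c \<in> insert m F" for c using that FT mT T_countable by blast
  qed
  then have "countable (\<Union>(insert m F))" by simp
  from ub_countable[OF om this] obtain b where b: "\<forall>x\<in>\<Union>(insert m F). x < b" by blast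
  obtain a where a: "a \<in> A" "b < a" using unbounded_stat[OF om st] by blast
  have abig: "x < a" if "x \<in> \<Union>(insert m F)" for x using b that a(2) by (meson less_trans)
  define s' where "s' = insert a m"
  have s'T: "s' \<in> TT" unfolding s'_def using T_insert[OF mT a(1)] .
  have ms': "initial_part m s'" unfolding s'_def by (rule ip_ext) (use abig in blast)
  have ss': "initial_part s s'" using m(2) G_def ms' ip_trans by blast
  have "cyl s' \<subseteq> U"
  proof
    fix y assume y: "y \<in> cyl s'"
    then obtain q where q: "q \<in> PT" "y = chi q" by (rule cyl_elem)
    have s'q: "s' \<in> q" using y q cyl_mem[OF s'T] by simp
    have qT: "q \<subseteq> TT" using path_sub[OF q(1)] .
    have "chi q \<in> PiE TT V"
      unfolding PiE_iff
    proof (intro conjI ballI)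
      show "chi q \<in> extensional TT" unfolding chi_def by simp
      fix i assume iT: "i \<in> TT"
      show "chi q i \<in> V i"
      proof (cases "i \<in> F")
        case False then show ?thesis using iT unfolding F_def by auto
      next
        case True
        have pv: "chi p i \<in> V i" using V(2) iT by (auto simp: PiE_iff)
        have ai: "a \<notin> i" using abig[of a] True by blast
        have "(i \<in> q) = (i \<in> p)"
        proof
          assume iq: "i \<in> q"
          from path_lin[OF q(1) iq s'q] show "i \<in> p"
          proof
            assume is': "initial_part i s'"
            have im: "initial_part i m" unfolding initial_part_def
            proof (intro conjI ballI impI)
              show "i \<subseteq> m" using ip_sub[OF is'] ai unfolding s'_def by blast
              fix u v assume "u \<in> i" "v \<in> m" "v \<le> u"
              then show "v \<in> i" using is' unfolding initial_part_def s'_def by blast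
            qed
            show "i \<in> p" by (rule path_down[OF p mp iT im])
          next
            assume "initial_part s' i"
            then have "a \<in> i" using ip_sub unfolding s'_def by blast
            then show "i \<in> p" using ai by blast
          qed
        next
          assume ip: "i \<in> p"
          then have "i \<in> G" unfolding G_def using True by blast
          then have "initial_part i s'" using m(2) ms' ip_trans by blast
          then show "i \<in> q" by (rule path_down[OF q(1) s'q iT])
        qed
        then have "chi q i = chi p i" using chi_app[OF iT] by simp
        then show ?thesis using pv by simp
      qed
    qed
    then have "chi q \<in> W" using V(3) by blast
    then show "y \<in> U" using W(2) q by blast
  qed
  then show ?thesis using s'T ss' by blast
qed

end


context ps begin

abbreviation "X2 \<equiv> prod_topology XX XX"

lemma L2:
  assumes s: "s \<in> TT" and t: "t \<in> TT" and W: "openin X2 W" and pq: "(chi p, chi q) \<in> W"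
    and p: "p \<in> PT" and q: "q \<in> PT" and sp: "s \<in> p" and tq: "t \<in> q"
  shows "\<exists>s' t'. s' \<in> TT \<and> t' \<in> TT \<and> initial_part s s' \<and> initial_part t t' \<and> cyl s' \<times> cyl t' \<subseteq> W"
proof -
  have "\<forall>x y. (x,y) \<in> W \<longrightarrow> (\<exists>U V. openin XX U \<and> openin XX V \<and> x \<in> U \<and> y \<in> V \<and> U \<times> V \<subseteq> W)"
    using W by (simp only: openin_prod_topology_alt)
  then have "\<exists>U V. openin XX U \<and> openin XX V \<and> chi p \<in> U \<and> chi q \<in> V \<and> U \<times> V \<subseteq> W"
    using pq by (elim allE impE)
  then obtain U V where UV: "openin XX U" "openin XX V" "chi p \<in> U" "chi q \<in> V" "U \<times> V \<subseteq> W"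
    by blast
  obtain s' where s': "s' \<in> TT" "initial_part s s'" "cyl s' \<subseteq> U" using L1[OF s UV(1) p UV(3) sp] by blast
  obtain t' where t': "t' \<in> TT" "initial_part t t'" "cyl t' \<subseteq> V" using L1[OF t UV(2) q UV(4) tq] by blast
  have "cyl s' \<times> cyl t' \<subseteq> U \<times> V" using s'(3) t'(3) by auto
  then have "cyl s' \<times> cyl t' \<subseteq> W" using UV(5) by (rule subset_trans)
  then show ?thesis using s' t' by blast
qed

lemma O_open: "s \<in> TT \<Longrightarrow> t \<in> TT \<Longrightarrow> openin X2 (cyl s \<times> cyl t)"
  using cyl_open by (simp add: openin_prod_Times_iff)

definition edense :: "(('a set \<Rightarrow> bool) \<times> ('a set \<Rightarrow> bool)) set \<Rightarrow> bool" where
  "edense N \<longleftrightarrow> (\<forall>s t. s \<in> TT \<longrightarrow> t \<in> TT \<longrightarrow> (\<exists>s' t'. s' \<in> TT \<and> t' \<in> TT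
      \<and> initial_part s s' \<and> initial_part t t' \<and> (cyl s' \<times> cyl t') \<inter> N = {}))"

lemma nwd_edense: assumes N: "nowhere_dense_in X2 N" shows "edense N"
  unfolding edense_def
proof (intro allI impI)
  fix s t assume s: "s \<in> TT" and t: "t \<in> TT"
  let ?O = "cyl s \<times> cyl t" and ?K = "X2 closure_of N"
  have NK: "N \<subseteq> ?K" using N unfolding nowhere_dense_in_def by (simp add: closure_of_subset)
  have "\<not> ?O \<subseteq> ?K"
  proof
    assume "?O \<subseteq> ?K"
    then have "?O \<subseteq> X2 interior_of ?K" using O_open[OF s t] by (rule interior_of_maximal)
    then have "?O = {}" using N unfolding nowhere_dense_in_def by blast
    moreover have "(chi (down s), chi (down t)) \<in> ?O" using cyl_ne s t by blast
    ultimately show False by blast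
  qed
  then obtain z where z: "z \<in> ?O" "z \<notin> ?K" by blast
  obtain x1 x2 where zz: "z = (x1, x2)" by (cases z)
  obtain p where p: "p \<in> PT" "x1 = chi p" using z zz by (auto elim: cyl_elem)
  obtain q where q: "q \<in> PT" "x2 = chi q" using z zz by (auto elim: cyl_elem)
  have sp: "s \<in> p" using z zz p cyl_mem[OF s] by auto
  have tq: "t \<in> q" using z zz q cyl_mem[OF t] by auto
  have Wo: "openin X2 (?O - ?K)" using O_open[OF s t] by (intro openin_diff) simp_all
  have "(chi p, chi q) \<in> ?O - ?K" using z zz p q by simp
  from L2[OF s t Wo this p(1) q(1) sp tq] obtain s' t' where
    st': "s' \<in> TT" "t' \<in> TT" "initial_part s s'" "initial_part t t'" "cyl s' \<times> cyl t' \<subseteq> ?O - ?K" by blast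
  then have "(cyl s' \<times> cyl t') \<inter> N = {}" using NK by blast
  then show "\<exists>s' t'. s' \<in> TT \<and> t' \<in> TT \<and> initial_part s s' \<and> initial_part t t' \<and> (cyl s' \<times> cyl t') \<inter> N = {}"
    using st' by blast
qed

lemma two_ext: assumes s: "s \<in> TT" and p: "p \<in> PT"
  shows "\<exists>s'. s' \<in> TT \<and> initial_part s s' \<and> s' \<notin> p"
proof -
  obtain b where b: "\<forall>x\<in>s. x < b" using ub_countable[OF om T_countable[OF s]] by blast
  obtain a1 where a1: "a1 \<in> A" "b < a1" using unbounded_stat[OF om st] by blast
  obtain a2 where a2: "a2 \<in> A" "a1 < a2" using unbounded_stat[OF om st] by blast
  have s1: "\<forall>x\<in>s. x < a1" using b a1 by (meson less_trans)
  have s2: "\<forall>x\<in>s. x < a2" using s1 a2 by (meson less_trans)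
  have a1s: "a1 \<notin> s" using s1 by blast
  have a2s: "a2 \<notin> s" using s2 by blast
  have ne: "a1 \<noteq> a2" using a2 by simp
  have i1: "initial_part s (insert a1 s)" by (rule ip_ext[OF s1])
  have i2: "initial_part s (insert a2 s)" by (rule ip_ext[OF s2])
  have "\<not> initial_part (insert a1 s) (insert a2 s)"
    using ip_sub[of "insert a1 s" "insert a2 s"] a1s ne by blast
  moreover have "\<not> initial_part (insert a2 s) (insert a1 s)"
    using ip_sub[of "insert a2 s" "insert a1 s"] a2s ne by blast
  ultimately have "insert a1 s \<notin> p \<or> insert a2 s \<notin> p" using path_lin[OF p] by blast
  then show ?thesis using i1 i2 T_insert[OF s a1(1)] T_insert[OF s a2(1)] by blast
qed

lemma disc_edense: assumes D: "discrete_subspace X2 D" shows "edense D"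
  unfolding edense_def
proof (intro allI impI)
  fix s t assume s: "s \<in> TT" and t: "t \<in> TT"
  let ?O = "cyl s \<times> cyl t"
  show "\<exists>s' t'. s' \<in> TT \<and> t' \<in> TT \<and> initial_part s s' \<and> initial_part t t' \<and> (cyl s' \<times> cyl t') \<inter> D = {}"
  proof (cases "?O \<inter> D = {}")
    case True then show ?thesis using s t ip_refl by blast
  next
    case False
    then obtain z where z: "z \<in> ?O" "z \<in> D" by blast
    obtain x1 x2 where zz: "z = (x1, x2)" by (cases z)
    obtain p where p: "p \<in> PT" "x1 = chi p" using z zz by (auto elim: cyl_elem)
    obtain q where q: "q \<in> PT" "x2 = chi q" using z zz by (auto elim: cyl_elem)
    have sp: "s \<in> p" using z zz p cyl_mem[OF s] by auto
    have tq: "t \<in> q" using z zz q cyl_mem[OF t] by auto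
    have "openin (subtopology X2 D) {z}" using D z unfolding discrete_subspace_def by simp
    then obtain W where W: "openin X2 W" "{z} = W \<inter> D" unfolding openin_subtopology by blast
    have Wo: "openin X2 (?O \<inter> W)" by (rule openin_Int[OF O_open[OF s t] W(1)])
    have "(chi p, chi q) \<in> ?O \<inter> W" using z zz p q W(2) by blast
    from L2[OF s t Wo this p(1) q(1) sp tq] obtain s1 t1 where
      st1: "s1 \<in> TT" "t1 \<in> TT" "initial_part s s1" "initial_part t t1" "cyl s1 \<times> cyl t1 \<subseteq> ?O \<inter> W" by blast
    obtain s2 where s2: "s2 \<in> TT" "initial_part s1 s2" "s2 \<notin> p" using two_ext[OF st1(1) p(1)] by blast
    have zn: "z \<notin> cyl s2 \<times> cyl t1" using zz p cyl_mem[OF s2(1) p(1)] s2(3) by simp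
    have sub: "cyl s2 \<times> cyl t1 \<subseteq> cyl s1 \<times> cyl t1" using cyl_mono[OF st1(1) s2(1) s2(2)] by blast
    have "(cyl s2 \<times> cyl t1) \<inter> D \<subseteq> W \<inter> D" using sub st1(5) by blast
    then have "(cyl s2 \<times> cyl t1) \<inter> D \<subseteq> {z}" using W(2) by simp
    then have "(cyl s2 \<times> cyl t1) \<inter> D = {}" using zn by blast
    moreover have "initial_part s s2" using st1(3) s2(2) by (rule ip_trans)
    ultimately show ?thesis using s2(1) st1(2) st1(4) by blast
  qed
qed

lemma main_contra:
  fixes N :: "nat \<Rightarrow> (('a set \<Rightarrow> bool) \<times> ('a set \<Rightarrow> bool)) set"
  assumes N: "\<And>n. edense (N n)"
  shows "\<not> dense_in X2 (\<Union>(range N))"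
proof
  assume dense: "dense_in X2 (\<Union>(range N))"
  define E where "E n = {(s', t'). s' \<in> TT \<and> t' \<in> TT \<and> (cyl s' \<times> cyl t') \<inter> N n = {}}" for n :: nat
  interpret dist A E
  proof
    show "omega1_like TYPE('a)" by (rule om)
    show "stationary A" by (rule st)
    fix n s t assume "s \<in> TT" "t \<in> TT"
    then obtain s' t' where st': "s' \<in> TT" "t' \<in> TT" "initial_part s s'" "initial_part t t'"
       "(cyl s' \<times> cyl t') \<inter> N n = {}"
      using N[of n] unfolding edense_def by blast
    have "(s', t') \<in> E n" unfolding E_def using st' by simp
    then show "\<exists>s' t'. s' \<in> TT \<and> t' \<in> TT \<and> initial_part s s' \<and> initial_part t t' \<and> (s', t') \<in> E n"
      using st' by blast
  qed
  obtain sw tw where sw: "sw \<in> TT" "tw \<in> TT"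
    and en: "\<forall>n. \<exists>s' t'. (s',t') \<in> E n \<and> initial_part s' sw \<and> initial_part t' tw"
    using dist_main by blast
  have disj: "(cyl sw \<times> cyl tw) \<inter> N n = {}" for n
  proof -
    obtain s' t' where st: "(s',t') \<in> E n" "initial_part s' sw" "initial_part t' tw" using en by blast
    then have st2: "s' \<in> TT" "t' \<in> TT" "(cyl s' \<times> cyl t') \<inter> N n = {}" unfolding E_def by auto
    have "cyl sw \<subseteq> cyl s'" by (rule cyl_mono[OF st2(1) sw(1) st(2)])
    moreover have "cyl tw \<subseteq> cyl t'" by (rule cyl_mono[OF st2(2) sw(2) st(3)])
    ultimately show ?thesis using st2(3) by blast
  qed
  then have "(cyl sw \<times> cyl tw) \<inter> \<Union>(range N) = {}" by blast
  then have "(cyl sw \<times> cyl tw) \<inter> X2 closure_of (\<Union>(range N)) = {}"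
    using openin_Int_closure_of_eq_empty[OF O_open[OF sw]] by blast
  then have "(cyl sw \<times> cyl tw) \<inter> topspace X2 = {}" using dense unfolding dense_in_def by simp
  moreover have "(chi (down sw), chi (down tw)) \<in> cyl sw \<times> cyl tw" using cyl_ne sw by blast
  moreover have "cyl sw \<times> cyl tw \<subseteq> topspace X2" using cyl_sub by auto
  ultimately show False by blast
qed

lemma not_nwd: "\<not> nwd_separable X2"
  unfolding nwd_separable_def
proof
  assume "\<exists>N::nat \<Rightarrow> _. dense_in X2 (\<Union>(range N)) \<and> (\<forall>n. nowhere_dense_in X2 (N n))"
  then obtain N :: "nat \<Rightarrow> _" where N: "dense_in X2 (\<Union>(range N))" "\<And>n. nowhere_dense_in X2 (N n)" by blast
  have e: "\<And>n. edense (N n)" using nwd_edense N(2) by blast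
  have "\<not> dense_in X2 (\<Union>(range N))" by (rule main_contra) (rule e)
  then show False using N(1) by blast
qed

lemma not_d: "\<not> d_separable X2"
  unfolding d_separable_def
proof
  assume "\<exists>N::nat \<Rightarrow> _. dense_in X2 (\<Union>(range N)) \<and> (\<forall>n. discrete_subspace X2 (N n))"
  then obtain N :: "nat \<Rightarrow> _" where N: "dense_in X2 (\<Union>(range N))" "\<And>n. discrete_subspace X2 (N n)" by blast
  have e: "\<And>n. edense (N n)" using disc_edense N(2) by blast
  have "\<not> dense_in X2 (\<Union>(range N))" by (rule main_contra) (rule e)
  then show False using N(1) by blast
qed

end


context ps begin

definition cond1 :: "'a set \<Rightarrow> 'a set \<Rightarrow> ('a set \<Rightarrow> bool) set" where
  "cond1 s t = {x \<in> topspace PP. x t \<in> {False}} \<union> {x \<in> topspace PP. x s \<in> {True}}"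
definition cond2 :: "'a set \<Rightarrow> 'a set \<Rightarrow> ('a set \<Rightarrow> bool) set" where
  "cond2 s t = {x \<in> topspace PP. x s \<in> {False}} \<union> {x \<in> topspace PP. x t \<in> {False}}"

definition KK where "KK = insert (topspace PP)
   ({cond1 s t | s t. s \<in> TT \<and> t \<in> TT \<and> initial_part s t}
    \<union> {cond2 s t | s t. s \<in> TT \<and> t \<in> TT \<and> \<not> initial_part s t \<and> \<not> initial_part t s})"

lemma KK_cases:
  assumes "S \<in> KK"
  obtains "S = topspace PP"
    | s t where "s \<in> TT" "t \<in> TT" "initial_part s t" "S = cond1 s t"
    | s t where "s \<in> TT" "t \<in> TT" "\<not> initial_part s t" "\<not> initial_part t s" "S = cond2 s t"
  using assms unfolding KK_def by auto

lemma KK_top: "topspace PP \<in> KK" unfolding KK_def by simp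
lemma KK_c1: "s \<in> TT \<Longrightarrow> t \<in> TT \<Longrightarrow> initial_part s t \<Longrightarrow> cond1 s t \<in> KK"
  unfolding KK_def by auto
lemma KK_c2: "s \<in> TT \<Longrightarrow> t \<in> TT \<Longrightarrow> \<not> initial_part s t \<Longrightarrow> \<not> initial_part t s \<Longrightarrow> cond2 s t \<in> KK"
  unfolding KK_def by auto

lemma pre_closed: "s \<in> TT \<Longrightarrow> closedin PP {x \<in> topspace PP. x s \<in> C}"
  by (rule closedin_continuous_map_preimage[OF continuous_map_product_projection]) simp_all

lemma KK_closed: "closedin PP (\<Inter>KK)"
proof (rule closedin_Inter)
  show "KK \<noteq> {}" using KK_top by blast
  fix S assume "S \<in> KK"
  then show "closedin PP S"
  proof (cases rule: KK_cases)
    case 1 then show ?thesis by (simp only: closedin_topspace)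
  next
    case (2 s t)
    have "closedin PP (cond1 s t)" unfolding cond1_def by (intro closedin_Un pre_closed 2(1) 2(2))
    then show ?thesis using 2(4) by simp
  next
    case (3 s t)
    have "closedin PP (cond2 s t)" unfolding cond2_def by (intro closedin_Un pre_closed 3(1) 3(2))
    then show ?thesis using 3(5) by simp
  qed
qed

lemma img_eq: "chi ` PT = \<Inter>KK"
proof
  show "chi ` PT \<subseteq> \<Inter>KK"
  proof
    fix x assume "x \<in> chi ` PT"
    then obtain p where p: "p \<in> PT" "x = chi p" by blast
    have xt: "x \<in> topspace PP" using p chi_PiE by simp
    show "x \<in> \<Inter>KK"
    proof
      fix S assume "S \<in> KK"
      then show "x \<in> S"
      proof (cases rule: KK_cases)
        case 1 then show ?thesis using xt by simp
      next
        case (2 s t)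
        have "t \<in> p \<longrightarrow> s \<in> p" using path_down[OF p(1) _ 2(1) 2(3)] by blast
        then show ?thesis using 2 xt p(2) chi_app unfolding cond1_def by auto
      next
        case (3 s t)
        have "\<not> (s \<in> p \<and> t \<in> p)" using path_lin[OF p(1)] 3 by blast
        then show ?thesis using 3 xt p(2) chi_app unfolding cond2_def by auto
      qed
    qed
  qed
  show "\<Inter>KK \<subseteq> chi ` PT"
  proof
    fix x assume x: "x \<in> \<Inter>KK"
    have xt: "x \<in> topspace PP" using x KK_top by blast
    have c1: "x \<in> cond1 s t" if "s \<in> TT" "t \<in> TT" "initial_part s t" for s t
      using x KK_c1[OF that] by blast
    have c2: "x \<in> cond2 s t" if "s \<in> TT" "t \<in> TT" "\<not> initial_part s t" "\<not> initial_part t s" for s t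
      using x KK_c2[OF that] by blast
    define p where "p = {t \<in> TT. x t}"
    have pP: "p \<in> PT"
    proof (rule pathI)
      show "p \<subseteq> TT" unfolding p_def by blast
      fix t s assume "t \<in> p" "s \<in> TT" "initial_part s t"
      then show "s \<in> p" using c1[of s t] unfolding p_def cond1_def by auto
    next
      fix s t assume st: "s \<in> p" "t \<in> p"
      show "initial_part s t \<or> initial_part t s"
      proof (rule ccontr)
        assume "\<not> (initial_part s t \<or> initial_part t s)"
        then have "x \<in> cond2 s t" using c2 st unfolding p_def by blast
        then show False using st unfolding p_def cond2_def by auto
      qed
    qed
    have "x = chi p"
    proof
      fix i show "x i = chi p i"
      proof (cases "i \<in> TT")
        case True then show ?thesis using chi_app[OF True] unfolding p_def by simp
      next
        case False
        have "x i = undefined" using xt False by (simp add: PiE_def extensional_def)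
        moreover have "chi p i = undefined" using False unfolding chi_def by simp
        ultimately show ?thesis by simp
      qed
    qed
    then show "x \<in> chi ` PT" using pP by blast
  qed
qed

lemma XX_compact: "compact_space XX"
proof -
  have "compact_space PP"
    by (simp add: compact_space_product_topology compact_space_discrete_topology)
  moreover have "closedin PP (chi ` PT)" using KK_closed img_eq by simp
  ultimately have "compactin PP (chi ` PT)" by (rule closedin_compact_space)
  then show ?thesis unfolding XX_eq by (rule compact_space_subtopology)
qed

definition jj :: "'a set \<Rightarrow> ('a set \<Rightarrow> bool) \<times> nat" where "jj t = ((\<lambda>s. s = t), 0)"

lemma jj_inj: "inj jj" unfolding jj_def inj_def by (metis Pair_inject)

definition ff :: "('a set \<Rightarrow> bool) \<Rightarrow> (('a set \<Rightarrow> bool) \<times> nat) \<Rightarrow> real" where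
  "ff x = restrict (\<lambda>i. if x (inv_into TT jj i) then 1 else 0) (jj ` TT)"

lemma ff_app: "t \<in> TT \<Longrightarrow> ff x (jj t) = (if x t then 1 else 0)"
  unfolding ff_def using inv_into_f_f[OF inj_on_subset[OF jj_inj subset_UNIV]] by simp

lemma corson:
  assumes stc: "stationary (- A)"
  shows "corson_compactum XX"
  unfolding corson_compactum_def
proof (intro conjI exI)
  show "compact_space XX" by (rule XX_compact)
  let ?I = "jj ` TT"
  let ?Y = "subtopology (product_topology (\<lambda>_. euclideanreal) ?I) (sigma_product ?I)"
  have cont1: "continuous_map XX (product_topology (\<lambda>_. euclideanreal) ?I) ff"
    unfolding continuous_map_componentwise
  proof (intro conjI ballI)
    show "ff ` topspace XX \<subseteq> extensional ?I" unfolding ff_def by auto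
    fix k assume "k \<in> ?I"
    then obtain t where t: "t \<in> TT" "k = jj t" by blast
    have "continuous_map XX (discrete_topology UNIV) (\<lambda>x. x t)"
      unfolding XX_eq by (rule continuous_map_from_subtopology[OF continuous_map_product_projection[OF t(1)]])
    moreover have "continuous_map (discrete_topology UNIV) euclideanreal (\<lambda>b::bool. if b then 1 else (0::real))"
      by simp
    ultimately have "continuous_map XX euclideanreal ((\<lambda>b::bool. if b then 1 else (0::real)) \<circ> (\<lambda>x. x t))"
      by (rule continuous_map_compose)
    moreover have "((\<lambda>b::bool. if b then 1 else (0::real)) \<circ> (\<lambda>x. x t)) = (\<lambda>x. ff x k)"
      using ff_app[OF t(1)] t(2) by (simp add: fun_eq_iff)
    ultimately show "continuous_map XX euclideanreal (\<lambda>x. ff x k)" by simp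
  qed
  have sig: "ff ` topspace XX \<subseteq> sigma_product ?I"
  proof
    fix y assume "y \<in> ff ` topspace XX"
    then obtain x where x: "x \<in> topspace XX" "y = ff x" by blast
    then obtain p where p: "p \<in> PT" "x = chi p" unfolding topX by blast
    have "countable p" by (rule path_countable[OF om stc p(1)])
    moreover have "{i \<in> ?I. ff x i \<noteq> 0} \<subseteq> jj ` p"
    proof
      fix i assume "i \<in> {i \<in> ?I. ff x i \<noteq> 0}"
      then obtain t where t: "t \<in> TT" "i = jj t" "ff x i \<noteq> 0" by blast
      then have "x t" using ff_app[OF t(1)] by (auto split: if_splits)
      then have "t \<in> p" using p(2) chi_app[OF t(1)] by simp
      then show "i \<in> jj ` p" using t(2) by blast
    qed
    ultimately have "countable {i \<in> ?I. ff x i \<noteq> 0}" by (meson countable_image countable_subset)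
    moreover have "ff x \<in> PiE ?I (\<lambda>_. UNIV)" unfolding ff_def by simp
    ultimately show "y \<in> sigma_product ?I" unfolding sigma_product_def x(2) by blast
  qed
  have cont: "continuous_map XX ?Y ff"
    by (simp add: continuous_map_in_subtopology cont1 image_subset_iff_funcset[symmetric] sig)
  have haus: "Hausdorff_space ?Y"
    by (rule Hausdorff_space_subtopology) (simp add: Hausdorff_space_product_topology)
  have inj: "inj_on ff (topspace XX)"
  proof
    fix x y assume x: "x \<in> topspace XX" and y: "y \<in> topspace XX" and e: "ff x = ff y"
    obtain p where p: "x = chi p" using x unfolding topX by blast
    obtain q where q: "y = chi q" using y unfolding topX by blast
    show "x = y"
    proof
      fix t show "x t = y t"
      proof (cases "t \<in> TT")
        case True
        have "ff x (jj t) = ff y (jj t)" using e by simp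
        then show ?thesis using ff_app[OF True] by (auto split: if_splits)
      next
        case False then show ?thesis using p q unfolding chi_def by simp
      qed
    qed
  qed
  show "embedding_map XX ?Y ff"
    by (rule continuous_imp_embedding_map[OF cont XX_compact haus inj])
qed

end

theorem theorem2p7:
  fixes A :: "'a::{wellorder,linorder_topology} set"
  assumes "omega1_like TYPE('a)"
    and "stationary A"
    and "stationary (- A)"
  shows "corson_compactum (path_space (ccs_tree A))
    \<and> \<not> nwd_separable (prod_topology (path_space (ccs_tree A)) (path_space (ccs_tree A)))
    \<and> \<not> d_separable (prod_topology (path_space (ccs_tree A)) (path_space (ccs_tree A)))"
proof -
  interpret ps A using assms(1,2) by unfold_locales
  show ?thesis using corson[OF assms(3)] not_nwd not_d by blast
qed

end
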